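(* For every instance of the CVRPTW with temporal dependencies that has a feasible solution, there exists an optimal feasible solution in which, for every route and every fragment $(v_1,\dots,v_\ell)$ of that route, the start times satisfy $b_{v_i}=\max\{b_{v_{i-1}}+d_{v_{i-1}}+t_{v_{i-1}v_i},\ \alpha_{v_i}\}$ for all $i=2,\dots,\ell-1$ (i.e., every fragment is performed according to a compact schedule).
   Context: Instance data: a task set $V=\{1,\dots,n\}$, a depot $0$, $N=V\cup\{0\}$. For distinct $u,v\in N$ there are a travel time $t_{uv}\ge 0$ and travel cost $c_{uv}\ge0$, both satisfying the triangle inequality. Each $v\in N$ has a duration $d_v\ge 0$, demand $q_v\ge 0$ and a time window $[\alpha_v,\beta_v]$ in which it must start; the depot has $d_0=q_0=0$, $[\alpha_0,\beta_0]=[0,T_{\max}]$. Vehicle capacity is $Q$ and there are $|K|$ vehicles. $D$ is a set of unordered pairs $\{u,v\}$ of distinct tasks, $V_D=\{v\in V:\exists \{u,v\}\in D\}$, and each $\{u,v\}\in D$ carries nonnegative parameters $\delta^{\min}_{uv},\delta^{\max}_{uv},\delta^{\min}_{vu},\delta^{\max}_{vu}$; start times $b_u,b_v$ satisfy the dependency if either $b_u\le b_v$ and $\delta^{\min}_{uv}\le b_v-b_u\le\delta^{\max}_{uv}$, or $b_v\le b_u$ and $\delta^{\min}_{vu}\le b_u-b_v\le\delta^{\max}_{vu}$. A feasible solution consists of at most $|K|$ routes $(0,w_1,\dots,w_m,0)$ such that every task lies in exactly one route, each route has total demand at most $Q$, and there are start times $b_w\in[\alpha_w,\beta_w]$ for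 all tasks with $b_{w_{i+1}}\ge b_{w_i}+d_{w_i}+t_{w_iw_{i+1}}$ along each route (with the depot departure at time $\ge 0$ and return by $T_{\max}$), and all pairs in $D$ satisfying their dependency; its cost is the total travel cost. Optimal means minimum cost. The fragments of a route are its maximal subsequences $(v_1,\dots,v_\ell)$ whose first and last elements are consecutive occurrences (along the route) of nodes from $V_D\cup\{0\}$. *)

theory Defs
  imports Complex_Main
begin

text \<open>An instance of the CVRPTW with temporal dependencies.
  Nodes are natural numbers: the depot is 0, the tasks are 1..n.\<close>

record cvrptw_inst =
  ntasks :: nat
  tt     :: "nat \<Rightarrow> nat \<Rightarrow> real"   \<comment> \<open>travel time t_uv\<close>
  cc     :: "nat \<Rightarrow> nat \<Rightarrow> real"   \<comment> \<open>travel cost c_uv\<close>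
  dur    :: "nat \<Rightarrow> real"
  dem    :: "nat \<Rightarrow> real"
  alpha  :: "nat \<Rightarrow> real"           \<comment> \<open>window start\<close>
  beta   :: "nat \<Rightarrow> real"           \<comment> \<open>window end\<close>
  Tmax   :: real
  cap    :: real
  nveh   :: nat
  Dset   :: "nat set set"
  dmin   :: "nat \<Rightarrow> nat \<Rightarrow> real"
  dmax   :: "nat \<Rightarrow> nat \<Rightarrow> real"

definition tasks :: "cvrptw_inst \<Rightarrow> nat set" where
  "tasks I = {1..ntasks I}"

definition nodes :: "cvrptw_inst \<Rightarrow> nat set" where
  "nodes I = insert 0 (tasks I)"

definition VD :: "cvrptw_inst \<Rightarrow> nat set" where
  "VD I = {v \<in> tasks I. \<exists>u. {u, v} \<in> Dset I}"

definition valid_instance :: "cvrptw_inst \<Rightarrow> bool" where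
  "valid_instance I \<longleftrightarrow>
     (\<forall>u\<in>nodes I. \<forall>v\<in>nodes I. u \<noteq> v \<longrightarrow> tt I u v \<ge> 0 \<and> cc I u v \<ge> 0) \<and>
     (\<forall>u\<in>nodes I. \<forall>v\<in>nodes I. \<forall>w\<in>nodes I. u \<noteq> v \<and> v \<noteq> w \<and> u \<noteq> w \<longrightarrow>
         tt I u w \<le> tt I u v + tt I v w \<and> cc I u w \<le> cc I u v + cc I v w) \<and>
     (\<forall>v\<in>nodes I. dur I v \<ge> 0 \<and> dem I v \<ge> 0) \<and>
     dur I 0 = 0 \<and> dem I 0 = 0 \<and> alpha I 0 = 0 \<and> beta I 0 = Tmax I \<and>
     (\<forall>p\<in>Dset I. \<exists>u v. p = {u, v} \<and> u \<noteq> v \<and> u \<in> tasks I \<and> v \<in> tasks I \<and>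
         dmin I u v \<ge> 0 \<and> dmax I u v \<ge> 0 \<and> dmin I v u \<ge> 0 \<and> dmax I v u \<ge> 0)"

definition dep_ok :: "cvrptw_inst \<Rightarrow> (nat \<Rightarrow> real) \<Rightarrow> nat \<Rightarrow> nat \<Rightarrow> bool" where
  "dep_ok I b u v \<longleftrightarrow>
     (b u \<le> b v \<and> dmin I u v \<le> b v - b u \<and> b v - b u \<le> dmax I u v) \<or>
     (b v \<le> b u \<and> dmin I v u \<le> b u - b v \<and> b u - b v \<le> dmax I v u)"

text \<open>A route is given by its task list ws = [w_1,...,w_m]; the full node
  sequence is (0, w_1, ..., w_m, 0).\<close>
definition route_seq :: "nat list \<Rightarrow> nat list" where
  "route_seq ws = 0 # ws @ [0]"

text \<open>Start time at position k (0 \<le> k \<le> m) of the route sequence: position 0 is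
  the depot departure time s0, position k \<ge> 1 is the start time of w_k.\<close>
definition pos_time :: "(nat \<Rightarrow> real) \<Rightarrow> real \<Rightarrow> nat list \<Rightarrow> nat \<Rightarrow> real" where
  "pos_time b s0 ws k = (if k = 0 then s0 else b (ws ! (k - 1)))"

text \<open>A solution: list of routes R (task lists), task start times b, and
  depot departure time s r for route number r.\<close>
definition feasible ::
  "cvrptw_inst \<Rightarrow> nat list list \<Rightarrow> (nat \<Rightarrow> real) \<Rightarrow> (nat \<Rightarrow> real) \<Rightarrow> bool" where
  "feasible I R b s \<longleftrightarrow>
     length R \<le> nveh I \<and>
     (\<forall>ws\<in>set R. ws \<noteq> []) \<and>
     distinct (concat R) \<and> set (concat R) = tasks I \<and>
     (\<forall>ws\<in>set R. sum_list (map (dem I) ws) \<le> cap I) \<and>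
     (\<forall>v\<in>tasks I. alpha I v \<le> b v \<and> b v \<le> beta I v) \<and>
     (\<forall>r<length R. let ws = R ! r in
         0 \<le> s r \<and> s r \<le> Tmax I \<and>
         s r + dur I 0 + tt I 0 (hd ws) \<le> b (hd ws) \<and>
         (\<forall>i. Suc i < length ws \<longrightarrow>
              b (ws ! i) + dur I (ws ! i) + tt I (ws ! i) (ws ! Suc i) \<le> b (ws ! Suc i)) \<and>
         b (last ws) + dur I (last ws) + tt I (last ws) 0 \<le> Tmax I) \<and>
     (\<forall>u v. {u, v} \<in> Dset I \<longrightarrow> u \<noteq> v \<longrightarrow> dep_ok I b u v)"

definition route_cost :: "cvrptw_inst \<Rightarrow> nat list \<Rightarrow> real" where
  "route_cost I ws = (let p = route_seq ws in
     \<Sum>k<length ws + 1. cc I (p ! k) (p ! Suc k))"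

definition total_cost :: "cvrptw_inst \<Rightarrow> nat list list \<Rightarrow> real" where
  "total_cost I R = sum_list (map (route_cost I) R)"

definition optimal ::
  "cvrptw_inst \<Rightarrow> nat list list \<Rightarrow> (nat \<Rightarrow> real) \<Rightarrow> (nat \<Rightarrow> real) \<Rightarrow> bool" where
  "optimal I R b s \<longleftrightarrow> feasible I R b s \<and>
     (\<forall>R' b' s'. feasible I R' b' s' \<longrightarrow> total_cost I R \<le> total_cost I R')"

text \<open>Fragment: positions i < j of the route sequence holding consecutive
  occurrences of nodes from VD \<union> {0}; the fragment is (p!i, ..., p!j).\<close>
definition is_fragment :: "cvrptw_inst \<Rightarrow> nat list \<Rightarrow> nat \<Rightarrow> nat \<Rightarrow> bool" where
  "is_fragment I ws i j \<longleftrightarrow> (let p = route_seq ws in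
     i < j \<and> j < length p \<and>
     p ! i \<in> insert 0 (VD I) \<and> p ! j \<in> insert 0 (VD I) \<and>
     (\<forall>k. i < k \<and> k < j \<longrightarrow> p ! k \<notin> insert 0 (VD I)))"

definition compact_fragment ::
  "cvrptw_inst \<Rightarrow> (nat \<Rightarrow> real) \<Rightarrow> real \<Rightarrow> nat list \<Rightarrow> nat \<Rightarrow> nat \<Rightarrow> bool" where
  "compact_fragment I b s0 ws i j \<longleftrightarrow> (let p = route_seq ws in
     \<forall>k. i < k \<and> k < j \<longrightarrow>
       pos_time b s0 ws k =
         max (pos_time b s0 ws (k - 1) + dur I (p ! (k - 1)) + tt I (p ! (k - 1)) (p ! k))
             (alpha I (p ! k)))"

end

theory Submission
  imports Defs
begin

primrec sched :: "cvrptw_inst \<Rightarrow> (nat \<Rightarrow> real) \<Rightarrow> real \<Rightarrow> nat list \<Rightarrow> nat \<Rightarrow> real" where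
  "sched I b s0 ws 0 = s0"
| "sched I b s0 ws (Suc k) = (if ws ! k \<in> VD I then b (ws ! k)
      else max (sched I b s0 ws k + dur I (route_seq ws ! k) + tt I (route_seq ws ! k) (ws ! k))
               (alpha I (ws ! k)))"

definition newb :: "cvrptw_inst \<Rightarrow> nat list list \<Rightarrow> (nat \<Rightarrow> real) \<Rightarrow> (nat \<Rightarrow> real) \<Rightarrow> nat \<Rightarrow> real" where
  "newb I R b s v = (if v \<in> set (concat R) \<and> v \<notin> VD I then
     (let rk = (SOME rk. fst rk < length R \<and> snd rk < length (R ! fst rk) \<and> R ! fst rk ! snd rk = v)
      in sched I b (s (fst rk)) (R ! fst rk) (Suc (snd rk))) else b v)"

lemma rs0: "route_seq ws ! 0 = 0"
  by (simp add: route_seq_def)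

lemma rsS: "k < length ws \<Longrightarrow> route_seq ws ! Suc k = ws ! k"
  by (simp add: route_seq_def nth_append)

lemma mem_concat_idx: "r < length R \<Longrightarrow> k < length (R ! r) \<Longrightarrow> R ! r ! k \<in> set (concat R)"
proof -
  assume a: "r < length R" "k < length (R ! r)"
  have "R ! r \<in> set R" using a by simp
  moreover have "R ! r ! k \<in> set (R ! r)" using a by simp
  ultimately show ?thesis unfolding set_concat by blast
qed

lemma uniq_idx:
  assumes "distinct (concat R)" "r < length R" "k < length (R ! r)"
    "r' < length R" "k' < length (R ! r')" "R ! r ! k = R ! r' ! k'"
  shows "r = r' \<and> k = k'"
  using assms
proof (induction R arbitrary: r r')
  case Nil then show ?case by simp
next
  case (Cons ws R)
  have d: "distinct ws" "distinct (concat R)" "set ws \<inter> set (concat R) = {}"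
    using Cons.prems(1) by auto
  show ?case
  proof (cases r)
    case 0
    show ?thesis
    proof (cases r')
      case 0
      with \<open>r = 0\<close> Cons.prems d show ?thesis by (simp add: nth_eq_iff_index_eq)
    next
      case (Suc q)
      have "R ! q \<in> set R" using Cons.prems(4) Suc by simp
      have "R ! q ! k' \<in> set (concat R)" proof -
        have "q < length R" "k' < length (R ! q)" using Cons.prems(4,5) Suc by auto
        then show ?thesis by (rule mem_concat_idx)
      qed
      moreover have "ws ! k \<in> set ws" using Cons.prems(3) 0 by simp
      ultimately show ?thesis using d Cons.prems(6) 0 Suc by auto
    qed
  next
    case (Suc q)
    show ?thesis
    proof (cases r')
      case 0
      have "R ! q \<in> set R" using Cons.prems(2) Suc by simp
      have "R ! q ! k \<in> set (concat R)" proof -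
        have "q < length R" "k < length (R ! q)" using Cons.prems(2,3) Suc by auto
        then show ?thesis by (rule mem_concat_idx)
      qed
      moreover have "ws ! k' \<in> set ws" using Cons.prems(5) 0 by simp
      ultimately show ?thesis using d Cons.prems(6) 0 Suc by auto
    next
      case (Suc q')
      with \<open>r = Suc q\<close> Cons.prems d Cons.IH[of q q'] show ?thesis by simp
    qed
  qed
qed

lemma newb_at:
  assumes "distinct (concat R)" "r < length R" "k < length (R ! r)"
  shows "newb I R b s (R ! r ! k) = sched I b (s r) (R ! r) (Suc k)"
proof (cases "R ! r ! k \<in> VD I")
  case True then show ?thesis by (simp add: newb_def)
next
  case False
  have mem: "R ! r ! k \<in> set (concat R)" using assms(2,3) by (rule mem_concat_idx)
  define P where "P = (\<lambda>rk. fst rk < length R \<and> snd rk < length (R ! fst rk) \<and> R ! fst rk ! snd rk = R ! r ! k)"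
  have "P (r, k)" using assms by (simp add: P_def)
  hence "P (SOME rk. P rk)" by (rule someI)
  then obtain r' k' where e: "(SOME rk. P rk) = (r', k')" and p': "P (r', k')"
    by (metis prod.collapse)
  have "r' = r \<and> k' = k" using uniq_idx[OF assms(1), of r' k' r k] p' assms(2,3) unfolding P_def by simp
  hence e2: "(SOME rk. P rk) = (r, k)" using e by simp
  have "newb I R b s (R ! r ! k) = (let rk = (SOME rk. P rk) in sched I b (s (fst rk)) (R ! fst rk) (Suc (snd rk)))"
    using False mem unfolding newb_def P_def by simp
  also have "\<dots> = sched I b (s r) (R ! r) (Suc k)" using e2 by simp
  finally show ?thesis .
qed

lemma newb_other: "v \<in> VD I \<Longrightarrow> newb I R b s v = b v"
  by (simp add: newb_def)

lemma pos_newb: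
  assumes "distinct (concat R)" "r < length R" "k \<le> length (R ! r)"
  shows "pos_time (newb I R b s) (s r) (R ! r) k = sched I b (s r) (R ! r) k"
proof (cases k)
  case 0 then show ?thesis by (simp add: pos_time_def)
next
  case (Suc q)
  then show ?thesis using newb_at[OF assms(1,2), of q] assms(3) by (simp add: pos_time_def)
qed

context
  fixes I :: cvrptw_inst and b :: "nat \<Rightarrow> real" and s0 :: real and ws :: "nat list"
  assumes H: "\<And>k. k < length ws \<Longrightarrow> pos_time b s0 ws k + dur I (route_seq ws ! k)
     + tt I (route_seq ws ! k) (route_seq ws ! Suc k) \<le> pos_time b s0 ws (Suc k)"
    and A: "\<And>k. k < length ws \<Longrightarrow> alpha I (ws ! k) \<le> b (ws ! k)"
begin

lemma L1: "k \<le> length ws \<Longrightarrow> sched I b s0 ws k \<le> pos_time b s0 ws k"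
proof (induction k)
  case 0 then show ?case by (simp add: pos_time_def)
next
  case (Suc k)
  have kl: "k < length ws" using Suc.prems by simp
  have IH: "sched I b s0 ws k \<le> pos_time b s0 ws k" using Suc by simp
  have h: "pos_time b s0 ws k + dur I (route_seq ws ! k) + tt I (route_seq ws ! k) (ws ! k) \<le> b (ws ! k)"
    using H[OF kl] rsS[OF kl] by (simp add: pos_time_def)
  show ?case using IH h A[OF kl] by (auto simp: pos_time_def)
qed

lemma L2: "k < length ws \<Longrightarrow> sched I b s0 ws k + dur I (route_seq ws ! k)
     + tt I (route_seq ws ! k) (route_seq ws ! Suc k) \<le> sched I b s0 ws (Suc k)"
proof -
  assume kl: "k < length ws"
  have IH: "sched I b s0 ws k \<le> pos_time b s0 ws k" using L1 kl by simp
  have h: "pos_time b s0 ws k + dur I (route_seq ws ! k) + tt I (route_seq ws ! k) (ws ! k) \<le> b (ws ! k)"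
    using H[OF kl] rsS[OF kl] by (simp add: pos_time_def)
  show ?thesis using IH h rsS[OF kl] by auto
qed

lemma L3: "k < length ws \<Longrightarrow> alpha I (ws ! k) \<le> sched I b s0 ws (Suc k)"
  using A by auto

end

lemma route_HA:
  assumes F: "feasible I R b s" and r: "r < length R"
  shows "\<And>k. k < length (R ! r) \<Longrightarrow> pos_time b (s r) (R ! r) k + dur I (route_seq (R ! r) ! k)
     + tt I (route_seq (R ! r) ! k) (route_seq (R ! r) ! Suc k) \<le> pos_time b (s r) (R ! r) (Suc k)"
    and "\<And>k. k < length (R ! r) \<Longrightarrow> alpha I (R ! r ! k) \<le> b (R ! r ! k)"
proof -
  let ?ws = "R ! r"
  have ne: "?ws \<noteq> []" using F r unfolding feasible_def by auto
  have c1: "s r + dur I 0 + tt I 0 (hd ?ws) \<le> b (hd ?ws)"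
    and c2: "\<And>i. Suc i < length ?ws \<Longrightarrow> b (?ws ! i) + dur I (?ws ! i) + tt I (?ws ! i) (?ws ! Suc i) \<le> b (?ws ! Suc i)"
    using F r unfolding feasible_def Let_def by auto
  show "\<And>k. k < length (R ! r) \<Longrightarrow> pos_time b (s r) (R ! r) k + dur I (route_seq (R ! r) ! k)
     + tt I (route_seq (R ! r) ! k) (route_seq (R ! r) ! Suc k) \<le> pos_time b (s r) (R ! r) (Suc k)"
  proof -
    fix k assume k: "k < length ?ws"
    show "pos_time b (s r) ?ws k + dur I (route_seq ?ws ! k)
     + tt I (route_seq ?ws ! k) (route_seq ?ws ! Suc k) \<le> pos_time b (s r) ?ws (Suc k)"
    proof (cases k)
      case 0
      then show ?thesis using c1 ne rsS[OF k] by (simp add: pos_time_def rs0 hd_conv_nth)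
    next
      case (Suc i)
      then show ?thesis using c2[of i] k rsS[OF k] rsS[of i ?ws] by (simp add: pos_time_def)
    qed
  qed
  show "\<And>k. k < length (R ! r) \<Longrightarrow> alpha I (R ! r ! k) \<le> b (R ! r ! k)"
  proof -
    fix k assume k: "k < length ?ws"
    have "?ws ! k \<in> set (concat R)" using r k by (rule mem_concat_idx)
    moreover have "set (concat R) = tasks I" using F unfolding feasible_def by blast
    ultimately have "?ws ! k \<in> tasks I" by (metis (no_types))
    then show "alpha I (?ws ! k) \<le> b (?ws ! k)" using F unfolding feasible_def by simp
  qed
qed

lemma fL1: assumes "feasible I R b s" "r < length R" "k \<le> length (R ! r)" shows
   "sched I b (s r) (R ! r) k \<le> pos_time b (s r) (R ! r) k"
  by (rule L1[OF route_HA(1)[OF assms(1,2)] route_HA(2)[OF assms(1,2)] assms(3)])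

lemma fL2: assumes "feasible I R b s" "r < length R" "k < length (R ! r)" shows
   "sched I b (s r) (R ! r) k + dur I (route_seq (R ! r) ! k)
     + tt I (route_seq (R ! r) ! k) (route_seq (R ! r) ! Suc k) \<le> sched I b (s r) (R ! r) (Suc k)"
  by (rule L2[OF route_HA(1)[OF assms(1,2)] route_HA(2)[OF assms(1,2)] assms(3)])

lemma fL3: assumes "feasible I R b s" "r < length R" "k < length (R ! r)" shows
   "alpha I (R ! r ! k) \<le> sched I b (s r) (R ! r) (Suc k)"
  by (rule L3[OF route_HA(1)[OF assms(1,2)] route_HA(2)[OF assms(1,2)] assms(3)])

lemma concat_idx: "v \<in> set (concat R) \<Longrightarrow> \<exists>r k. r < length R \<and> k < length (R ! r) \<and> R ! r ! k = v"
proof -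
  assume "v \<in> set (concat R)"
  then obtain ws where ws: "ws \<in> set R" "v \<in> set ws" by auto
  then obtain r where r: "r < length R" "R ! r = ws" by (auto simp: in_set_conv_nth)
  obtain k where "k < length ws" "ws ! k = v" using ws(2) by (auto simp: in_set_conv_nth)
  then show ?thesis using r by blast
qed

lemma resched:
  assumes V: "valid_instance I" and F: "feasible I R b s"
  shows "feasible I R (newb I R b s) s \<and>
     (\<forall>r < length R. \<forall>i j. is_fragment I (R ! r) i j \<longrightarrow>
               compact_fragment I (newb I R b s) (s r) (R ! r) i j)"
proof -
  let ?b = "newb I R b s"
  have dist: "distinct (concat R)" using F unfolding feasible_def by blast
  have setc: "set (concat R) = tasks I" using F unfolding feasible_def by blast
  note l1 = fL1[OF F] and l2 = fL2[OF F] and l3 = fL3[OF F]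
  have tb: "alpha I v \<le> ?b v \<and> ?b v \<le> beta I v" if v: "v \<in> tasks I" for v
  proof -
    obtain r k where rk: "r < length R" "k < length (R ! r)" "R ! r ! k = v"
    proof -
      have "v \<in> set (concat R)" using v setc by (metis (no_types))
      then show ?thesis using concat_idx[of v R] that by blast
    qed
    have e: "?b v = sched I b (s r) (R ! r) (Suc k)" using newb_at[OF dist rk(1,2)] rk(3) by simp
    have "sched I b (s r) (R ! r) (Suc k) \<le> pos_time b (s r) (R ! r) (Suc k)"
      using l1[OF rk(1), of "Suc k"] rk(2) by simp
    hence le: "?b v \<le> b v" using e rk(3) by (simp add: pos_time_def)
    have "alpha I v \<le> ?b v" using l3[OF rk(1,2)] e rk(3) by simp
    moreover have "b v \<le> beta I v" using F v unfolding feasible_def by blast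
    ultimately show ?thesis using le by simp
  qed
  have routes: "let ws = R ! r in
         0 \<le> s r \<and> s r \<le> Tmax I \<and>
         s r + dur I 0 + tt I 0 (hd ws) \<le> ?b (hd ws) \<and>
         (\<forall>i. Suc i < length ws \<longrightarrow>
              ?b (ws ! i) + dur I (ws ! i) + tt I (ws ! i) (ws ! Suc i) \<le> ?b (ws ! Suc i)) \<and>
         ?b (last ws) + dur I (last ws) + tt I (last ws) 0 \<le> Tmax I" if r: "r < length R" for r
  proof -
    let ?ws = "R ! r"
    have ne: "?ws \<noteq> []" using F r unfolding feasible_def by auto
    have o1: "0 \<le> s r" "s r \<le> Tmax I"
      and o3: "b (last ?ws) + dur I (last ?ws) + tt I (last ?ws) 0 \<le> Tmax I"
      using F r unfolding feasible_def Let_def by auto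
    have h0: "0 < length ?ws" using ne by simp
    have "s r + dur I 0 + tt I 0 (hd ?ws) \<le> ?b (hd ?ws)"
      using l2[OF r h0] rsS[OF h0] newb_at[OF dist r h0] ne by (simp add: rs0 hd_conv_nth)
    moreover have "\<forall>i. Suc i < length ?ws \<longrightarrow>
              ?b (?ws ! i) + dur I (?ws ! i) + tt I (?ws ! i) (?ws ! Suc i) \<le> ?b (?ws ! Suc i)"
    proof (intro allI impI)
      fix i assume i: "Suc i < length ?ws"
      have i': "i < length ?ws" using i by simp
      show "?b (?ws ! i) + dur I (?ws ! i) + tt I (?ws ! i) (?ws ! Suc i) \<le> ?b (?ws ! Suc i)"
        using l2[OF r i] newb_at[OF dist r i] newb_at[OF dist r i'] rsS[OF i] rsS[OF i'] by simp
    qed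
    moreover have "?b (last ?ws) \<le> b (last ?ws)"
    proof -
      obtain m where m: "length ?ws = Suc m" using ne by (cases "length ?ws") auto
      have lm: "last ?ws = ?ws ! m" using m ne by (simp add: last_conv_nth)
      have "?b (?ws ! m) = sched I b (s r) ?ws (Suc m)" using newb_at[OF dist r] m by simp
      also have "\<dots> \<le> pos_time b (s r) ?ws (Suc m)" using l1[OF r, of "Suc m"] m by simp
      also have "\<dots> = b (?ws ! m)" by (simp add: pos_time_def)
      finally show ?thesis using lm by simp
    qed
    ultimately show ?thesis using o1 o3 unfolding Let_def by simp
  qed
  have deps: "dep_ok I ?b u v" if dD: "{u, v} \<in> Dset I" "u \<noteq> v" for u v
  proof -
    have Vd: "\<forall>p\<in>Dset I. \<exists>u v. p = {u, v} \<and> u \<noteq> v \<and> u \<in> tasks I \<and> v \<in> tasks I \<and>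
         dmin I u v \<ge> 0 \<and> dmax I u v \<ge> 0 \<and> dmin I v u \<ge> 0 \<and> dmax I v u \<ge> 0"
      using V unfolding valid_instance_def by (elim conjE)
    then obtain u' v' where e: "{u, v} = {u', v'}" and t': "u' \<in> tasks I" "v' \<in> tasks I"
      using dD(1) by meson
    have "u \<in> {u', v'}" "v \<in> {u', v'}" using e by (metis insertI1, metis insertI1 insertI2 insert_commute)
    hence t: "u \<in> tasks I" "v \<in> tasks I" using t' by auto
    have "{v, u} \<in> Dset I" using that(1) by (simp add: insert_commute)
    hence "u \<in> VD I" "v \<in> VD I" using t that(1) unfolding VD_def by blast+
    hence "?b u = b u" "?b v = b v" by (simp_all add: newb_other)
    moreover have "dep_ok I b u v" using F that unfolding feasible_def by blast
    ultimately show ?thesis unfolding dep_ok_def by simp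
  qed
  have feas: "feasible I R ?b s"
  proof -
    have f1: "length R \<le> nveh I" "\<forall>ws\<in>set R. ws \<noteq> []"
      "\<forall>ws\<in>set R. sum_list (map (dem I) ws) \<le> cap I"
      using F unfolding feasible_def by blast+
    have "\<forall>v\<in>tasks I. alpha I v \<le> ?b v \<and> ?b v \<le> beta I v" using tb by blast
    moreover have "\<forall>r<length R. let ws = R ! r in
         0 \<le> s r \<and> s r \<le> Tmax I \<and>
         s r + dur I 0 + tt I 0 (hd ws) \<le> ?b (hd ws) \<and>
         (\<forall>i. Suc i < length ws \<longrightarrow>
              ?b (ws ! i) + dur I (ws ! i) + tt I (ws ! i) (ws ! Suc i) \<le> ?b (ws ! Suc i)) \<and>
         ?b (last ws) + dur I (last ws) + tt I (last ws) 0 \<le> Tmax I" using routes by blast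
    moreover have "\<forall>u v. {u, v} \<in> Dset I \<longrightarrow> u \<noteq> v \<longrightarrow> dep_ok I ?b u v" using deps by blast
    ultimately show ?thesis unfolding feasible_def using f1 dist setc by (intro conjI) 
  qed
  have comp: "compact_fragment I ?b (s r) (R ! r) i j"
    if r: "r < length R" and fr: "is_fragment I (R ! r) i j" for r i j
    unfolding compact_fragment_def Let_def
  proof (intro allI impI)
    let ?ws = "R ! r"
    fix k assume k: "i < k \<and> k < j"
    have j: "j < length ?ws + 2" and nk: "route_seq ?ws ! k \<notin> insert 0 (VD I)"
      using fr k unfolding is_fragment_def Let_def by (auto simp: route_seq_def)
    obtain q where q: "k = Suc q" using k by (cases k) auto
    have ql: "q < length ?ws" using q k j by simp
    have nv: "?ws ! q \<notin> VD I" using nk rsS[OF ql] q by simp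
    have "pos_time ?b (s r) ?ws k = sched I b (s r) ?ws (Suc q)"
      using pos_newb[OF dist r, of k] q ql by simp
    also have "\<dots> = max (sched I b (s r) ?ws q + dur I (route_seq ?ws ! q) + tt I (route_seq ?ws ! q) (?ws ! q))
               (alpha I (?ws ! q))" using nv by simp
    also have "\<dots> = max (pos_time ?b (s r) ?ws (k - 1) + dur I (route_seq ?ws ! (k - 1)) + tt I (route_seq ?ws ! (k - 1)) (route_seq ?ws ! k))
             (alpha I (route_seq ?ws ! k))"
      using pos_newb[OF dist r, of q] q ql rsS[OF ql] by simp
    finally show "pos_time ?b (s r) ?ws k = max (pos_time ?b (s r) ?ws (k - 1) + dur I (route_seq ?ws ! (k - 1)) + tt I (route_seq ?ws ! (k - 1)) (route_seq ?ws ! k))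
             (alpha I (route_seq ?ws ! k))" .
  qed
  show ?thesis using feas comp by blast
qed

lemma feas_finite: "finite {R. \<exists>b s. feasible I R b s}"
proof -
  let ?W = "{ws. set ws \<subseteq> tasks I \<and> length ws \<le> card (tasks I)}"
  have fW: "finite ?W" using finite_lists_length_le[of "tasks I"] by (simp add: tasks_def)
  have "{R. \<exists>b s. feasible I R b s} \<subseteq> {R. set R \<subseteq> ?W \<and> length R \<le> nveh I}"
  proof
    fix R assume "R \<in> {R. \<exists>b s. feasible I R b s}"
    then obtain b s where F: "feasible I R b s" by blast
    have d: "distinct (concat R)" and sc: "set (concat R) = tasks I" and l: "length R \<le> nveh I"
      using F unfolding feasible_def by blast+
    have "set R \<subseteq> ?W"
    proof
      fix ws assume ws: "ws \<in> set R"
      have sub: "set ws \<subseteq> tasks I" using ws sc by auto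
      have "distinct ws" using d ws by (simp add: distinct_concat_iff)
      hence "length ws = card (set ws)" by (simp add: distinct_card)
      also have "\<dots> \<le> card (tasks I)" using sub by (intro card_mono) (simp_all add: tasks_def)
      finally show "ws \<in> ?W" using sub by simp
    qed
    then show "R \<in> {R. set R \<subseteq> ?W \<and> length R \<le> nveh I}" using l by simp
  qed
  moreover have "finite {R. set R \<subseteq> ?W \<and> length R \<le> nveh I}"
    by (rule finite_lists_length_le[OF fW])
  ultimately show ?thesis by (rule finite_subset)
qed

theorem mainTheorem3:
  assumes "valid_instance I"
    and "\<exists>R b s. feasible I R b s"
  shows "\<exists>R b s. optimal I R b s \<and>
           (\<forall>r < length R. \<forall>i j. is_fragment I (R ! r) i j \<longrightarrow>
               compact_fragment I b (s r) (R ! r) i j)"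
proof -
  let ?S = "{R. \<exists>b s. feasible I R b s}"
  have ne: "?S \<noteq> {}" using assms(2) by blast
  have fin: "finite (total_cost I ` ?S)" using feas_finite by simp
  let ?m = "Min (total_cost I ` ?S)"
  have "?m \<in> total_cost I ` ?S" using fin ne by (intro Min_in) auto
  then obtain R where R: "R \<in> ?S" and Rm: "total_cost I R = ?m" by (metis (no_types, lifting) imageE)
  obtain b s where F: "feasible I R b s" using R by blast
  have low: "total_cost I R \<le> total_cost I R'" if "feasible I R' b' s'" for R' b' s'
  proof -
    have "R' \<in> ?S" using that by blast
    hence "?m \<le> total_cost I R'" using fin by (intro Min_le) auto
    then show ?thesis using Rm by simp
  qed
  have rs: "feasible I R (newb I R b s) s \<and>
     (\<forall>r < length R. \<forall>i j. is_fragment I (R ! r) i j \<longrightarrow>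
               compact_fragment I (newb I R b s) (s r) (R ! r) i j)"
    by (rule resched[OF assms(1) F])
  have "optimal I R (newb I R b s) s" unfolding optimal_def using rs low by blast
  then show ?thesis using rs by blast
qed

end
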